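(* Let $G$ be a finite set of items, $k=|G|$, and $1\le m\le k$. Then there exist quasi-fields $\Sigma,\Sigma'\subseteq 2^G$ with $|\Sigma|=|\Sigma'|=2^m$, a set of agents, and a type profile $\theta$ such that $$\frac{W_{\max}(\theta^{\Sigma})}{W_{\max}(\theta^{\Sigma'})}\ge\frac{m}{\lceil m^2/k\rceil}.$$
   Context: Combinatorial auction: a finite set $G$ of items and agents $N$; an outcome assigns pairwise disjoint bundles $o_i\subseteq G$ to the agents. A type $\theta_i$ of agent $i$ is a valuation $v_i(\cdot,\theta_i):2^G\to\mathbb{R}_{\ge0}$ with $v_i(\emptyset,\theta_i)=0$ and $v_i(B,\theta_i)\le v_i(C,\theta_i)$ whenever $B\subseteq C$. For a profile $x$ of bid functions $x_i:2^G\to\mathbb{R}$, $W_{\max}(x)=\max_{o}\sum_i x_i(o_i)$ over all outcomes $o$. A set $\Sigma\subseteq 2^G$ with $\emptyset\in\Sigma$ is a quasi-field if $B\in\Sigma$ implies $G\setminus B\in\Sigma$, and $B,C\in\Sigma$ with $B\cap C=\emptyset$ implies $B\cup C\in\Sigma$. For a quasi-field $\Sigma$ the projection of a valuation $x_i$ is $x_i^\Sigma(B)=\max_{B'\in\Sigma,\,B'\subseteq B}x_i(B')$, and $\theta^\Sigma$ denotes the profile of projected true valuations $(v_i(\cdot,\theta_i)^\Sigma)_{i}$. *)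

theory Defs
  imports "HOL-Analysis.Analysis"
begin

definition quasi_field :: "'g set \<Rightarrow> 'g set set \<Rightarrow> bool" where
  "quasi_field G \<Sigma> \<longleftrightarrow> \<Sigma> \<subseteq> Pow G \<and> {} \<in> \<Sigma> \<and>
     (\<forall>B\<in>\<Sigma>. G - B \<in> \<Sigma>) \<and>
     (\<forall>B\<in>\<Sigma>. \<forall>C\<in>\<Sigma>. B \<inter> C = {} \<longrightarrow> B \<union> C \<in> \<Sigma>)"

definition valuation :: "'g set \<Rightarrow> ('g set \<Rightarrow> real) \<Rightarrow> bool" where
  "valuation G v \<longleftrightarrow> v {} = 0 \<and> (\<forall>B\<subseteq>G. v B \<ge> 0) \<and>
     (\<forall>B C. B \<subseteq> C \<and> C \<subseteq> G \<longrightarrow> v B \<le> v C)"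

definition outcomes :: "'g set \<Rightarrow> 'a set \<Rightarrow> ('a \<Rightarrow> 'g set) set" where
  "outcomes G N = {ou. (\<forall>i\<in>N. ou i \<subseteq> G) \<and> (\<forall>i. i \<notin> N \<longrightarrow> ou i = {}) \<and>
     (\<forall>i\<in>N. \<forall>j\<in>N. i \<noteq> j \<longrightarrow> ou i \<inter> ou j = {})}"

definition W_max :: "'g set \<Rightarrow> 'a set \<Rightarrow> ('a \<Rightarrow> 'g set \<Rightarrow> real) \<Rightarrow> real" where
  "W_max G N x = Max ((\<lambda>ou. \<Sum>i\<in>N. x i (ou i)) ` outcomes G N)"

definition proj :: "'g set set \<Rightarrow> ('g set \<Rightarrow> real) \<Rightarrow> 'g set \<Rightarrow> real" where
  "proj \<Sigma> x B = Max (x ` {B'\<in>\<Sigma>. B' \<subseteq> B})"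

end

theory Submission imports Defs begin

definition is_part :: "'g set \<Rightarrow> 'g set set \<Rightarrow> bool" where
 "is_part G P \<longleftrightarrow> finite P \<and> (\<forall>B\<in>P. B \<noteq> {}) \<and> (\<forall>B\<in>P. \<forall>C\<in>P. B \<noteq> C \<longrightarrow> B \<inter> C = {}) \<and> \<Union>P = G"

lemma part_inj:
  assumes "is_part G P" shows "inj_on Union (Pow P)"
proof (rule inj_onI)
  fix S T assume S: "S \<in> Pow P" and T: "T \<in> Pow P" and eq: "\<Union>S = \<Union>T"
  have *: "S \<subseteq> T" if S: "S \<subseteq> P" and T: "T \<subseteq> P" and eq: "\<Union>S = \<Union>T" for S T
  proof
    fix B assume B: "B \<in> S"
    then have "B \<noteq> {}" using assms S unfolding is_part_def by blast
    then obtain x where x: "x \<in> B" by blast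
    then have "x \<in> \<Union>T" using eq B by blast
    then obtain C where C: "C \<in> T" "x \<in> C" by blast
    have "B \<in> P" "C \<in> P" using S T B C by auto
    then have "B = C"
      using assms x C(2) unfolding is_part_def by (metis disjoint_iff)
    then show "B \<in> T" using C by simp
  qed
  show "S = T" using *[of S T] *[of T S] S T eq by auto
qed

lemma part_card:
  assumes "is_part G P" shows "card (Union ` Pow P) = 2 ^ card P"
proof -
  have "finite P" using assms unfolding is_part_def by simp
  then show ?thesis by (simp add: card_image[OF part_inj[OF assms]] card_Pow)
qed

lemma part_qf:
  assumes "is_part G P" shows "quasi_field G (Union ` Pow P)"
  unfolding quasi_field_def
proof (intro conjI ballI impI)
  show "Union ` Pow P \<subseteq> Pow G" using assms unfolding is_part_def by auto
  show "{} \<in> Union ` Pow P" by (rule image_eqI[of _ _ "{}"]) auto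
next
  fix B assume "B \<in> Union ` Pow P"
  then obtain S where S: "S \<subseteq> P" "B = \<Union>S" by blast
  have "G - B = \<Union>(P - S)"
  proof
    show "G - B \<subseteq> \<Union>(P - S)" using assms S unfolding is_part_def by auto
    show "\<Union>(P - S) \<subseteq> G - B"
    proof
      fix x assume "x \<in> \<Union>(P - S)"
      then obtain C where C: "C \<in> P" "C \<notin> S" "x \<in> C" by blast
      have "x \<notin> D" if "D \<in> S" for D
      proof
        assume "x \<in> D"
        then have "C = D" using assms C that S unfolding is_part_def by (metis disjoint_iff subsetD)
        then show False using C that by simp
      qed
      then show "x \<in> G - B" using C assms S unfolding is_part_def by auto
    qed
  qed
  then show "G - B \<in> Union ` Pow P" by blast
next
  fix B C assume "B \<in> Union ` Pow P" "C \<in> Union ` Pow P"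
  then obtain S T where "S \<subseteq> P" "B = \<Union>S" "T \<subseteq> P" "C = \<Union>T" by blast
  then have "B \<union> C = \<Union>(S \<union> T)" "S \<union> T \<subseteq> P" by auto
  then show "B \<union> C \<in> Union ` Pow P" by blast
qed

lemma outcomes_finite:
  assumes "finite G" "finite N" shows "finite (outcomes G N)"
proof -
  have "outcomes G N \<subseteq> {f. \<forall>x. (x \<in> N \<longrightarrow> f x \<in> Pow G) \<and> (x \<notin> N \<longrightarrow> f x = {})}"
    unfolding outcomes_def by auto
  moreover have "finite {f. \<forall>x. (x \<in> N \<longrightarrow> f x \<in> Pow G) \<and> (x \<notin> N \<longrightarrow> f x = {})}"
    using finite_set_of_finite_funs[of N "Pow G" "{}"] assms by simp
  ultimately show ?thesis by (rule finite_subset)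
qed

lemma proj_in:
  assumes "finite S" "{} \<in> S" shows "proj S x B \<in> x ` {B'\<in>S. B' \<subseteq> B}"
  unfolding proj_def using assms by (intro Max_in) auto

lemma proj_ge:
  assumes "finite S" "B' \<in> S" "B' \<subseteq> B" shows "x B' \<le> proj S x B"
  unfolding proj_def using assms by (intro Max_ge) auto

lemma W_ge:
  assumes "finite G" "finite N" "ou \<in> outcomes G N"
  shows "(\<Sum>i\<in>N. x i (ou i)) \<le> W_max G N x"
  unfolding W_max_def using assms outcomes_finite by (intro Max_ge) auto

lemma W_le:
  assumes "finite G" "finite N" "\<And>ou. ou \<in> outcomes G N \<Longrightarrow> (\<Sum>i\<in>N. x i (ou i)) \<le> c"
  shows "W_max G N x \<le> c"
proof -
  have "(\<lambda>i. {}) \<in> outcomes G N" unfolding outcomes_def by auto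
  then show ?thesis
  unfolding W_max_def using assms outcomes_finite by (subst Max_le_iff) auto
qed


lemma num_bound:
  fixes m k :: nat
  assumes "1 \<le> m" "m \<le> k"
  shows "real m / real (nat \<lceil>real (m ^ 2) / real k\<rceil>) \<le> real (min m (k - m + 1))"
proof -
  define c where "c = nat \<lceil>real (m ^ 2) / real k\<rceil>"
  have kpos: "real k > 0" using assms by simp
  have q: "real (m^2) / real k > 0" using assms kpos by simp
  have cge: "real c \<ge> real (m ^ 2) / real k" unfolding c_def
  proof -
    have "\<lceil>real (m ^ 2) / real k\<rceil> \<ge> 0" using q by simp
    then have "real (nat \<lceil>real (m ^ 2) / real k\<rceil>) = real_of_int \<lceil>real (m ^ 2) / real k\<rceil>"
      by simp
    then show "real (nat \<lceil>real (m ^ 2) / real k\<rceil>) \<ge> real (m ^ 2) / real k"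
      using le_of_int_ceiling by simp
  qed
  have c1: "real c \<ge> 1"
  proof -
    have "\<lceil>real (m ^ 2) / real k\<rceil> \<ge> 1" using q by simp
    then show ?thesis unfolding c_def by linarith
  qed
  have key: "real m \<le> real (min m (k - m + 1)) * real c"
  proof (cases "m \<le> k - m + 1")
    case True
    then have "real (min m (k - m + 1)) = real m" by simp
    then show ?thesis using c1 mult_left_mono[of 1 "real c" "real m"] by simp
  next
    case False
    then have n: "real (min m (k - m + 1)) = real k - real m + 1" using assms by (simp add: of_nat_diff)
    have "real k \<le> (real k - real m + 1) * real m"
    proof -
      have "0 \<le> (real m - 1) * (real k - real m)" using assms by simp
      then show ?thesis by (simp add: algebra_simps)
    qed
    then have "real k * real m \<le> (real k - real m + 1) * real m * real m"
      by (rule mult_right_mono) simp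
    then have "real m \<le> (real k - real m + 1) * (real (m^2) / real k)"
      using kpos by (simp add: field_simps power2_eq_square)
    also have "\<dots> \<le> (real k - real m + 1) * real c"
      using cge assms by (intro mult_left_mono) auto
    finally show ?thesis unfolding n .
  qed
  show ?thesis unfolding c_def[symmetric] using key c1 by (simp add: divide_le_eq)
qed


lemma part_block_R:
  assumes P': "is_part G P'" and R: "R \<in> P'" and B: "B \<in> Union ` Pow P'"
    and x: "x \<in> B" "x \<in> R"
  shows "R \<subseteq> B"
proof -
  obtain S where S: "S \<subseteq> P'" "B = \<Union>S" using B by blast
  then obtain C where C: "C \<in> S" "x \<in> C" using x by blast
  have "C \<in> P'" using C S by auto
  then have "C = R" using P' R C x unfolding is_part_def by (metis disjoint_iff)
  then show ?thesis using C S by auto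
qed

lemma key_abstract:
  fixes N :: "nat set" and A :: "nat \<Rightarrow> 'g set"
  assumes fG: "finite G" and P: "is_part G P" and P': "is_part G P'" and R: "R \<in> P'"
    and fN: "finite N" and N0: "N \<noteq> {}" and AP: "\<forall>i\<in>N. A i \<in> P"
    and Ainj: "inj_on A N" and AR: "\<forall>i\<in>N. A i \<inter> R \<noteq> {}"
    and v: "v = (\<lambda>i B. if A i \<subseteq> B then 1 else 0 :: real)"
  shows "(\<forall>i\<in>N. valuation G (v i))"
    and "W_max G N (\<lambda>i. proj (Union ` Pow P') (v i)) = 1"
    and "W_max G N (\<lambda>i. proj (Union ` Pow P) (v i)) \<ge> real (card N)"
proof -
  have Ane: "A i \<noteq> {}" "A i \<subseteq> G" if "i \<in> N" for i
    using AP P that unfolding is_part_def by auto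
  show "\<forall>i\<in>N. valuation G (v i)"
    unfolding valuation_def v using Ane by auto
  have fS: "finite (Union ` Pow P)" "finite (Union ` Pow P')"
    using P P' unfolding is_part_def by auto
  have eS: "{} \<in> Union ` Pow P" "{} \<in> Union ` Pow P'"
    by (auto intro: image_eqI[of _ _ "{}"])
  have p01: "proj S (v i) B = 0 \<or> proj S (v i) B = 1" if "finite S" "{} \<in> S" for S i B
    using proj_in[OF that, of "v i" B] v by auto
  have pge0: "proj S (v i) B \<ge> 0" if "finite S" "{} \<in> S" for S i B
    using p01[OF that, of i B] by auto
  have ple1: "proj S (v i) B \<le> 1" if "finite S" "{} \<in> S" for S i B
    using p01[OF that, of i B] by auto
  have "W_max G N (\<lambda>i. proj (Union ` Pow P') (v i)) \<le> 1"
  proof (rule W_le[OF fG fN])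
    fix ou assume ou: "ou \<in> outcomes G N"
    let ?f = "\<lambda>i. proj (Union ` Pow P') (v i) (ou i)"
    define T where "T = {i\<in>N. ?f i \<noteq> 0}"
    have RT: "R \<subseteq> ou i" if "i \<in> T" for i
    proof -
      have iN: "i \<in> N" and ne: "?f i \<noteq> 0" using that T_def by auto
      obtain B' where B': "B' \<in> Union ` Pow P'" "B' \<subseteq> ou i" "?f i = v i B'"
        using proj_in[OF fS(2) eS(2), of "v i" "ou i"] by auto
      then have "A i \<subseteq> B'" using ne v by (auto split: if_splits)
      moreover obtain x where "x \<in> A i" "x \<in> R" using AR iN by blast
      ultimately have "R \<subseteq> B'" using part_block_R[OF P' R B'(1)] by blast
      then show ?thesis using B' by blast
    qed
    have Rne: "R \<noteq> {}" using P' R unfolding is_part_def by auto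
    have Tsub: "\<forall>a\<in>T. \<forall>b\<in>T. a = b"
    proof (intro ballI)
      fix a b assume a: "a \<in> T" and b: "b \<in> T"
      show "a = b"
      proof (rule ccontr)
        assume "a \<noteq> b"
        then have "ou a \<inter> ou b = {}" using ou a b T_def unfolding outcomes_def by auto
        then show False using RT[OF a] RT[OF b] Rne by blast
      qed
    qed
    have fT: "finite T" using fN T_def by auto
    have cT: "card T \<le> 1" using card_le_Suc0_iff_eq[OF fT] Tsub by simp
    have "(\<Sum>i\<in>N. ?f i) = (\<Sum>i\<in>T. ?f i)"
      by (rule sum.mono_neutral_right) (use fN T_def in auto)
    also have "\<dots> = (\<Sum>i\<in>T. 1)"
      by (rule sum.cong) (use p01[OF fS(2) eS(2)] T_def in auto)
    also have "\<dots> = real (card T)" by simp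
    also have "\<dots> \<le> 1" using cT by simp
    finally show "(\<Sum>i\<in>N. ?f i) \<le> 1" .
  qed
  moreover have "W_max G N (\<lambda>i. proj (Union ` Pow P') (v i)) \<ge> 1"
  proof -
    obtain i0 where i0: "i0 \<in> N" using N0 by blast
    define ou where "ou = (\<lambda>i. if i = i0 then G else {})"
    have ouo: "ou \<in> outcomes G N" unfolding outcomes_def ou_def using i0 by auto
    have GS: "G \<in> Union ` Pow P'" using P' unfolding is_part_def by blast
    have "1 \<le> proj (Union ` Pow P') (v i0) (ou i0)"
      using proj_ge[OF fS(2) GS, of G "v i0"] Ane[OF i0] v ou_def by simp
    also have "\<dots> \<le> (\<Sum>i\<in>N. proj (Union ` Pow P') (v i) (ou i))"
      by (rule member_le_sum) (use i0 fN pge0[OF fS(2) eS(2)] in auto)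
    also have "\<dots> \<le> W_max G N (\<lambda>i. proj (Union ` Pow P') (v i))"
      by (rule W_ge[OF fG fN ouo])
    finally show ?thesis .
  qed
  ultimately show "W_max G N (\<lambda>i. proj (Union ` Pow P') (v i)) = 1" by simp
  define ou where "ou = (\<lambda>i. if i \<in> N then A i else {})"
  have ouo: "ou \<in> outcomes G N"
  proof -
    have "A i \<inter> A j = {}" if "i \<in> N" "j \<in> N" "i \<noteq> j" for i j
    proof -
      have "A i \<noteq> A j" using Ainj that inj_on_eq_iff by metis
      then show ?thesis using P AP that unfolding is_part_def by blast
    qed
    then show ?thesis unfolding outcomes_def ou_def using Ane by auto
  qed
  have "(\<Sum>i\<in>N. proj (Union ` Pow P) (v i) (ou i)) = (\<Sum>i\<in>N. 1)"
  proof (rule sum.cong)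
    fix i assume i: "i \<in> N"
    have AS: "A i \<in> Union ` Pow P" using AP i by (intro image_eqI[of _ _ "{A i}"]) auto
    have "1 \<le> proj (Union ` Pow P) (v i) (ou i)"
      using proj_ge[OF fS(1) AS, of "A i" "v i"] v ou_def i by simp
    then show "proj (Union ` Pow P) (v i) (ou i) = 1" using ple1[OF fS(1) eS(1)] by (simp add: order_antisym)
  qed simp
  then have "real (card N) = (\<Sum>i\<in>N. proj (Union ` Pow P) (v i) (ou i))" by simp
  also have "\<dots> \<le> W_max G N (\<lambda>i. proj (Union ` Pow P) (v i))"
    by (rule W_ge[OF fG fN ouo])
  finally show "W_max G N (\<lambda>i. proj (Union ` Pow P) (v i)) \<ge> real (card N)" .
qed

theorem proposition4:
  fixes G :: "'g set" and m :: nat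
  assumes "finite G" and "1 \<le> m" and "m \<le> card G"
  shows "\<exists>(\<Sigma> :: 'g set set) (\<Sigma>' :: 'g set set) (N :: nat set) (v :: nat \<Rightarrow> 'g set \<Rightarrow> real).
           quasi_field G \<Sigma> \<and> quasi_field G \<Sigma>' \<and>
           card \<Sigma> = 2 ^ m \<and> card \<Sigma>' = 2 ^ m \<and>
           finite N \<and> N \<noteq> {} \<and> (\<forall>i\<in>N. valuation G (v i)) \<and>
           W_max G N (\<lambda>i. proj \<Sigma>' (v i)) > 0 \<and>
           W_max G N (\<lambda>i. proj \<Sigma> (v i)) / W_max G N (\<lambda>i. proj \<Sigma>' (v i))
             \<ge> real m / real (nat \<lceil>real (m ^ 2) / real (card G)\<rceil>)"
proof -
  define k where "k = card G"
  obtain f where f: "bij_betw f {0..<k} G" using ex_bij_betw_nat_finite[OF assms(1)] k_def by blast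
  have finj: "inj_on f {0..<k}" and fim: "f ` {0..<k} = G" using f unfolding bij_betw_def by auto
  have mk: "1 \<le> m" "m \<le> k" using assms k_def by auto
  define A where "A = (\<lambda>j. f ` {x\<in>{0..<k}. x mod m = j})"
  define P where "P = A ` {..<m}"
  define R where "R = f ` {0..<k-m+1}"
  define P' where "P' = insert R ((\<lambda>x. {f x}) ` {k-m+1..<k})"
  define n where "n = min m (k - m + 1)"
  define N where "N = {..<n}"
  define v where "v = (\<lambda>i B. if A i \<subseteq> B then 1 else 0 :: real)"
  have fjA: "f j \<in> A j" if "j < m" for j
    unfolding A_def using that mk by (intro imageI) auto
  have Aeq: "f x \<in> A j \<longleftrightarrow> x mod m = j" if "x < k" for x j
  proof
    assume "f x \<in> A j"
    then obtain y where y: "y < k" "y mod m = j" "f x = f y" unfolding A_def by auto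
    then have "x = y" using finj that by (auto dest: inj_onD)
    then show "x mod m = j" using y by simp
  qed (use that in \<open>auto simp: A_def\<close>)
  have Asub: "A j \<subseteq> G" for j using fim unfolding A_def by auto
  have Ainj: "inj_on A {..<m}"
  proof (rule inj_onI)
    fix i j assume i: "i \<in> {..<m}" and j: "j \<in> {..<m}" and e: "A i = A j"
    have "f i \<in> A j" using fjA[of i] i e by simp
    then have "i mod m = j" using Aeq[of i j] i mk by simp
    then show "i = j" using i by simp
  qed
  have cardP: "card P = m" unfolding P_def using card_image[OF Ainj] by simp
  have partP: "is_part G P" unfolding is_part_def
  proof (intro conjI ballI impI)
    show "finite P" unfolding P_def by simp
  next
    fix B assume "B \<in> P" then show "B \<noteq> {}" unfolding P_def using fjA by auto
  next
    fix B C assume B: "B \<in> P" and C: "C \<in> P" and BC: "B \<noteq> C"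
    then obtain i j where ij: "B = A i" "C = A j" "i \<noteq> j" unfolding P_def by auto
    show "B \<inter> C = {}"
    proof (rule ccontr)
      assume "B \<inter> C \<noteq> {}"
      then obtain y where "y \<in> A i" "y \<in> A j" using ij by auto
      then obtain x where x: "x < k" "y = f x" unfolding A_def by auto
      then show False using Aeq[of x i] Aeq[of x j] \<open>y \<in> A i\<close> \<open>y \<in> A j\<close> ij by simp
    qed
  next
    show "\<Union>P = G"
    proof
      show "\<Union>P \<subseteq> G" unfolding P_def using Asub by auto
      show "G \<subseteq> \<Union>P"
      proof
        fix y assume "y \<in> G"
        then obtain x where x: "x < k" "y = f x" using fim by auto
        then have "y \<in> A (x mod m)" using Aeq by simp
        moreover have "x mod m < m" using mk by simp
        ultimately show "y \<in> \<Union>P" unfolding P_def by auto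
      qed
    qed
  qed
  have Rsub: "R \<subseteq> G" unfolding R_def using fim mk by auto
  have sing_notR: "{f x} \<noteq> R" if "x \<in> {k-m+1..<k}" for x
  proof
    assume "{f x} = R"
    then have "f 0 = f x" unfolding R_def by auto
    then have "0 = x" using finj that by (auto dest: inj_onD)
    then show False using that by simp
  qed
  have sinj: "inj_on (\<lambda>x. {f x}) {k-m+1..<k}"
    by (rule inj_onI) (use finj in \<open>auto dest: inj_onD\<close>)
  have cardP': "card P' = m"
  proof -
    have "card ((\<lambda>x. {f x}) ` {k-m+1..<k}) = m - 1" using card_image[OF sinj] mk by simp
    moreover have "R \<notin> (\<lambda>x. {f x}) ` {k-m+1..<k}"
    proof
      assume "R \<in> (\<lambda>x. {f x}) ` {k-m+1..<k}"
      then obtain x where "x \<in> {k-m+1..<k}" "R = {f x}" by blast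
      then show False using sing_notR by metis
    qed
    ultimately show ?thesis unfolding P'_def using mk by simp
  qed
  have partP': "is_part G P'" unfolding is_part_def
  proof (intro conjI ballI impI)
    show "finite P'" unfolding P'_def by simp
  next
    fix B assume "B \<in> P'" then show "B \<noteq> {}" unfolding P'_def R_def using mk by auto
  next
    fix B C assume B: "B \<in> P'" and C: "C \<in> P'" and BC: "B \<noteq> C"
    have dRs: "R \<inter> {f x} = {}" if "x \<in> {k-m+1..<k}" for x
    proof -
      have "f x \<notin> R"
      proof
        assume "f x \<in> R"
        then obtain y where "y < k-m+1" "f x = f y" unfolding R_def by auto
        then show False using finj that by (auto dest: inj_onD)
      qed
      then show ?thesis by auto
    qed
    show "B \<inter> C = {}"
      using B C BC dRs unfolding P'_def by auto
  next
    show "\<Union>P' = G"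
    proof
      show "\<Union>P' \<subseteq> G" unfolding P'_def using Rsub fim by auto
      show "G \<subseteq> \<Union>P'"
      proof
        fix y assume "y \<in> G"
        then obtain x where x: "x < k" "y = f x" using fim by auto
        show "y \<in> \<Union>P'"
        proof (cases "x < k - m + 1")
          case True then show ?thesis unfolding P'_def R_def using x by auto
        next
          case False then show ?thesis unfolding P'_def using x by auto
        qed
      qed
    qed
  qed
  have RP': "R \<in> P'" unfolding P'_def by simp
  have n1: "1 \<le> n" unfolding n_def using mk by simp
  have fN: "finite N" and N0: "N \<noteq> {}" unfolding N_def using n1 by (auto simp: lessThan_empty_iff)
  have cN: "card N = n" unfolding N_def by simp
  have AP: "\<forall>i\<in>N. A i \<in> P" unfolding N_def P_def n_def by auto
  have AinjN: "inj_on A N" using Ainj by (rule inj_on_subset) (auto simp: N_def n_def)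
  have AR: "\<forall>i\<in>N. A i \<inter> R \<noteq> {}"
  proof
    fix i assume "i \<in> N"
    then have i: "i < m" "i < k - m + 1" unfolding N_def n_def by auto
    then have "f i \<in> A i" "f i \<in> R" using fjA unfolding R_def by auto
    then show "A i \<inter> R \<noteq> {}" by blast
  qed
  note K = key_abstract[OF assms(1) partP partP' RP' fN N0 AP AinjN AR v_def]
  have ratio: "W_max G N (\<lambda>i. proj (Union ` Pow P) (v i)) / W_max G N (\<lambda>i. proj (Union ` Pow P') (v i))
      \<ge> real m / real (nat \<lceil>real (m ^ 2) / real (card G)\<rceil>)"
  proof -
    have "real m / real (nat \<lceil>real (m ^ 2) / real (card G)\<rceil>) \<le> real n"
      using num_bound[OF mk] unfolding n_def k_def .
    also have "\<dots> \<le> W_max G N (\<lambda>i. proj (Union ` Pow P) (v i))" using K(3) cN by simp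
    finally show ?thesis using K(2) by simp
  qed
  show ?thesis
    apply (rule exI[of _ "Union ` Pow P"], rule exI[of _ "Union ` Pow P'"], rule exI[of _ N], rule exI[of _ v])
    using part_qf[OF partP] part_qf[OF partP'] part_card[OF partP] part_card[OF partP'] cardP cardP'
      fN N0 K ratio by simp
qed

end
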